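(* Let $r\ge4$. Let $\alpha>0$ be sufficiently small in terms of $r$, and let $\delta>0$ be sufficiently small in terms of $\alpha$. Let $\mathcal C$ be a nonempty collection of balanced cuts and $H$ a graph on $V=[n]$. If $H$ is rigid (with respect to $\mathcal C$), then there are distinct $(\mathcal C,H)$-components $S_1,\dots,S_{r-1}$ each of size greater than $n/r$.
   Context: A cut is an ordered partition $\Pi=(A_1,\dots,A_{r-1})$ of $V$. It is balanced if each block has size strictly between $(1-\delta)n/(r-1)$ and $(1+\delta)n/(r-1)$. $\mathrm{ext}(\Pi)$ is the set of pairs meeting two distinct blocks, and $|\Pi_H|=|H\cap\mathrm{ext}(\Pi)|$. $b(\mathcal C,H)=\max\{|\Pi_H|:\Pi\in\mathcal C\}$ and $\max(\mathcal C,H)=\{\Pi\in\mathcal C:|\Pi_H|=b(\mathcal C,H)\}$. Write $x\equiv y$ if $x$ and $y$ lie in the same block of $\Pi$ for every $\Pi\in\max(\mathcal C,H)$. The equivalence classes of $\equiv$ are the $(\mathcal C,H)$-components. $H$ is rigid if the number of unordered pairs $\{x,y\}$ ($x\ne y$) with $x\equiv y$ is at least $(1-\alpha)n^2/(2(r-1))$. *)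

theory Defs
  imports Complex_Main
begin

text \<open>A cut with r-1 blocks is a
function Pi :: nat => nat set whose blocks are Pi 0, ..., Pi (r-2); Pi i = {}
for i >= r-1 (so that cuts are determined by their blocks).\<close>

definition vset :: "nat \<Rightarrow> nat set" where
  "vset n = {1..n}"

definition is_cut :: "nat \<Rightarrow> nat \<Rightarrow> (nat \<Rightarrow> nat set) \<Rightarrow> bool" where
  "is_cut r n P \<longleftrightarrow>
     (\<forall>i<r-1. P i \<subseteq> vset n) \<and>
     (\<forall>i<r-1. \<forall>j<r-1. i \<noteq> j \<longrightarrow> P i \<inter> P j = {}) \<and>
     (\<Union>i<r-1. P i) = vset n \<and>
     (\<forall>i\<ge>r-1. P i = {})"

definition balanced :: "nat \<Rightarrow> real \<Rightarrow> nat \<Rightarrow> (nat \<Rightarrow> nat set) \<Rightarrow> bool" where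
  "balanced r \<delta> n P \<longleftrightarrow> is_cut r n P \<and>
     (\<forall>i<r-1. (1 - \<delta>) * real n / real (r-1) < real (card (P i)) \<and>
              real (card (P i)) < (1 + \<delta>) * real n / real (r-1))"

definition is_graph :: "nat \<Rightarrow> nat set set \<Rightarrow> bool" where
  "is_graph n H \<longleftrightarrow> (\<forall>e\<in>H. \<exists>x y. x \<noteq> y \<and> x \<in> vset n \<and> y \<in> vset n \<and> e = {x, y})"

definition ext :: "nat \<Rightarrow> nat \<Rightarrow> (nat \<Rightarrow> nat set) \<Rightarrow> nat set set" where
  "ext r n P = {{x, y} | x y. x \<noteq> y \<and> x \<in> vset n \<and> y \<in> vset n \<and>
       (\<exists>i<r-1. \<exists>j<r-1. i \<noteq> j \<and> x \<in> P i \<and> y \<in> P j)}"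

definition cut_size :: "nat \<Rightarrow> nat \<Rightarrow> (nat \<Rightarrow> nat set) \<Rightarrow> nat set set \<Rightarrow> nat" where
  "cut_size r n P H = card (H \<inter> ext r n P)"

definition bval :: "nat \<Rightarrow> nat \<Rightarrow> (nat \<Rightarrow> nat set) set \<Rightarrow> nat set set \<Rightarrow> nat" where
  "bval r n C H = Max ((\<lambda>P. cut_size r n P H) ` C)"

definition maxcuts :: "nat \<Rightarrow> nat \<Rightarrow> (nat \<Rightarrow> nat set) set \<Rightarrow> nat set set \<Rightarrow> (nat \<Rightarrow> nat set) set" where
  "maxcuts r n C H = {P \<in> C. cut_size r n P H = bval r n C H}"

definition cequiv :: "nat \<Rightarrow> nat \<Rightarrow> (nat \<Rightarrow> nat set) set \<Rightarrow> nat set set \<Rightarrow> nat \<Rightarrow> nat \<Rightarrow> bool" where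
  "cequiv r n C H x y \<longleftrightarrow> (\<forall>P\<in>maxcuts r n C H. \<exists>i<r-1. x \<in> P i \<and> y \<in> P i)"

definition is_component :: "nat \<Rightarrow> nat \<Rightarrow> (nat \<Rightarrow> nat set) set \<Rightarrow> nat set set \<Rightarrow> nat set \<Rightarrow> bool" where
  "is_component r n C H S \<longleftrightarrow> (\<exists>x\<in>vset n. S = {y \<in> vset n. cequiv r n C H x y})"

definition rigid :: "nat \<Rightarrow> real \<Rightarrow> nat \<Rightarrow> (nat \<Rightarrow> nat set) set \<Rightarrow> nat set set \<Rightarrow> bool" where
  "rigid r \<alpha> n C H \<longleftrightarrow>
     real (card {{x, y} | x y. x \<noteq> y \<and> x \<in> vset n \<and> y \<in> vset n \<and> cequiv r n C H x y})
       \<ge> (1 - \<alpha>) * real n ^ 2 / (2 * real (r-1))"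

end

theory Submission
  imports Defs
begin

lemma arith_core:
  fixes q n \<alpha> \<delta> b s M :: real
  assumes q: "q \<ge> 3" and n: "n > 0" and a0: "0 < \<alpha>" and a1: "\<alpha> \<le> 1/(4*(q+1)*q)"
    and d0: "0 < \<delta>" and d1: "\<delta> \<le> 1/(8*(q+1)^2)"
    and M: "M = (1+\<delta>)*n/q" and b0: "0 \<le> b" and b1: "b \<le> (q-1)*M"
    and s1: "s \<le> M*b + n/(q+1)*(n-b)" and s2: "s \<ge> (1-\<alpha>)*n^2/q"
  shows False
proof -
  have Mn: "M \<ge> n/q" using M q n d0 by (simp add: divide_right_mono)
  have "n/(q+1) \<le> n/q" using q n by (simp add: frac_le)
  hence Mge: "M - n/(q+1) \<ge> 0" using Mn by linarith
  have "s \<le> (M - n/(q+1))*b + n^2/(q+1)" using s1 by (simp add: algebra_simps power2_eq_square diff_divide_distrib)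
  also have "\<dots> \<le> (M - n/(q+1))*((q-1)*M) + n^2/(q+1)"
    using mult_left_mono[OF b1 Mge] by simp
  finally have s3: "s \<le> (M - n/(q+1))*((q-1)*M) + n^2/(q+1)" .
  have e: "(M - n/(q+1))*((q-1)*M) + n^2/(q+1) = n^2 * ((q-1)*(1+\<delta>)*(1+\<delta>*(q+1)) + q^2) / (q^2*(q+1))"
  proof -
    have q0: "q \<noteq> 0" "q+1 \<noteq> 0" using q by auto
    have "M - n/(q+1) = n*(1+\<delta>*(q+1))/(q*(q+1))" using q0 by (simp add: M field_simps)
    moreover have "n*(1+\<delta>*(q+1))/(q*(q+1)) * ((q-1)*((1+\<delta>)*n/q)) + n^2/(q+1) = n^2 * ((q-1)*(1+\<delta>)*(1+\<delta>*(q+1)) + q^2) / (q^2*(q+1))"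
      using q0 by (simp add: divide_simps) (simp add: algebra_simps power2_eq_square)
    ultimately show ?thesis by (simp add: M)
  qed
  have e2: "(1-\<alpha>)*n^2/q = n^2 * ((1-\<alpha>)*q*(q+1)) / (q^2*(q+1))"
    using q by (simp add: divide_simps) (simp add: algebra_simps power2_eq_square)
  have "\<alpha>*(4*(q+1)*q) \<le> 1" using a1 q by (subst (asm) pos_le_divide_eq) auto
  hence k1: "\<alpha>*q*(q+1) \<le> 1/4" by (simp add: algebra_simps)
  have "\<delta>*(8*(q+1)^2) \<le> 1" using d1 q by (subst (asm) pos_le_divide_eq) auto
  hence k2: "\<delta>*(2*(q+1)^2) \<le> 1/4" by (simp add: algebra_simps)
  have "(q+1)*(q+1) \<ge> 1*1" using q by (intro mult_mono) auto
  hence "(8*(q+1)^2) \<ge> 1" by (simp add: power2_eq_square)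
  hence "\<delta>*1 \<le> \<delta>*(8*(q+1)^2)" using d0 by (intro mult_left_mono) auto
  hence "\<delta> \<le> 1" using \<open>\<delta>*(8*(q+1)^2) \<le> 1\<close> by simp
  hence dd: "\<delta>*\<delta> \<le> \<delta>" using d0 by (metis mult_left_mono mult.right_neutral less_imp_le)
  have k3a: "(q-1)*(\<delta>*(q+2)+\<delta>*\<delta>*(q+1)) \<le> (q-1)*(\<delta>*(q+2)+\<delta>*(q+1))"
  proof -
    have "\<delta>*\<delta>*(q+1) \<le> \<delta>*(q+1)" using dd q by (intro mult_right_mono) auto
    thus ?thesis using q by (intro mult_left_mono) auto
  qed
  have k3b: "(q-1)*(\<delta>*(q+2)+\<delta>*(q+1)) \<le> \<delta>*(2*(q+1)^2)"
  proof -
    have "(q-1)*(2*q+3) \<le> 2*(q+1)^2" using q by (simp add: power2_eq_square algebra_simps)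
    hence "\<delta>*((q-1)*(2*q+3)) \<le> \<delta>*(2*(q+1)^2)" using d0 by (intro mult_left_mono) auto
    thus ?thesis by (simp add: algebra_simps)
  qed
  have k3: "(q-1)*(\<delta>*(q+2)+\<delta>*\<delta>*(q+1)) \<le> \<delta>*(2*(q+1)^2)" using k3a k3b by linarith
  have key: "(q-1)*(1+\<delta>)*(1+\<delta>*(q+1)) + q^2 < (1-\<alpha>)*q*(q+1)"
  proof -
    have "(q-1)*(1+\<delta>)*(1+\<delta>*(q+1)) = (q-1) + (q-1)*(\<delta>*(q+2)+\<delta>*\<delta>*(q+1))" by (simp add: algebra_simps)
    then show ?thesis using k1 k2 k3 by (simp add: algebra_simps power2_eq_square)
  qed
  have "n^2 * ((q-1)*(1+\<delta>)*(1+\<delta>*(q+1)) + q^2) / (q^2*(q+1)) < n^2 * ((1-\<alpha>)*q*(q+1)) / (q^2*(q+1))"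
    using key n q by (intro divide_strict_right_mono mult_strict_left_mono) auto
  then show False using s2 s3 e e2 by linarith
qed

lemma main_aux:
  fixes r n :: nat and \<alpha> \<delta> :: real and C H
  assumes r: "r \<ge> 4" and a0: "0 < \<alpha>" and a1: "\<alpha> \<le> 1/(4*(real (r-1)+1)*real (r-1))"
    and d0: "0 < \<delta>" and d1: "\<delta> \<le> 1/(8*(real (r-1)+1)^2)"
    and C: "C \<noteq> {}" and bal: "\<forall>P\<in>C. balanced r \<delta> n P" and rig: "rigid r \<alpha> n C H"
  shows "\<exists>S :: nat \<Rightarrow> nat set. inj_on S {..<r-1} \<and>
                    (\<forall>i<r-1. is_component r n C H (S i) \<and> real (card (S i)) > real n / real r)"
proof -
  define V where "V = vset n"
  have finV: "finite V" and cardV: "card V = n" by (auto simp: V_def vset_def)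
  define q where "q = real (r-1)"
  have q3: "q \<ge> 3" using r by (simp add: q_def)
  have rq: "real r = q + 1" using r by (simp add: q_def of_nat_diff)
  define M where "M = (1+\<delta>)*real n/q"
  have cs_le: "cut_size r n P H \<le> card (Pow V)" for P
  proof -
    have "H \<inter> ext r n P \<subseteq> Pow V" by (auto simp: ext_def V_def)
    thus ?thesis unfolding cut_size_def using finV by (intro card_mono) auto
  qed
  have fin_img: "finite ((\<lambda>P. cut_size r n P H) ` C)"
    by (rule finite_subset[of _ "{..card (Pow V)}"]) (auto simp: cs_le)
  have "bval r n C H \<in> (\<lambda>P. cut_size r n P H) ` C"
    unfolding bval_def using fin_img C by (intro Max_in) auto
  then obtain P0 where P0C: "P0 \<in> C" and P0m: "cut_size r n P0 H = bval r n C H" by auto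
  have P0max: "P0 \<in> maxcuts r n C H" using P0C P0m by (simp add: maxcuts_def)
  have cutP: "is_cut r n P" if "P \<in> maxcuts r n C H" for P
    using that bal by (auto simp: maxcuts_def balanced_def)
  have r1: "0 < r - 1" using r by simp
  have npos: "n > 0"
  proof (rule ccontr)
    assume "\<not> n > 0"
    hence "n = 0" by simp
    have "balanced r \<delta> 0 P0" using bal P0C \<open>n = 0\<close> by auto
    hence "real (card (P0 0)) < 0 \<and> 0 < real (card (P0 0))" using r1 unfolding balanced_def by force
    thus False by simp
  qed
  define ceq where "ceq = cequiv r n C H"
  have refl: "ceq x x" if "x \<in> V" for x
    unfolding ceq_def cequiv_def
  proof
    fix P assume "P \<in> maxcuts r n C H"
    hence "(\<Union>i<r-1. P i) = V" using cutP by (auto simp: is_cut_def V_def)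
    thus "\<exists>i<r-1. x \<in> P i \<and> x \<in> P i" using that by auto
  qed
  have sym: "ceq x y \<Longrightarrow> ceq y x" for x y unfolding ceq_def cequiv_def by blast
  have trans: "ceq x z" if t1: "ceq x y" and t2: "ceq y z" for x y z
    unfolding ceq_def cequiv_def
  proof
    fix P assume P: "P \<in> maxcuts r n C H"
    obtain i where i: "i < r-1" "x \<in> P i" "y \<in> P i" using t1 P unfolding ceq_def cequiv_def by blast
    obtain j where j: "j < r-1" "y \<in> P j" "z \<in> P j" using t2 P unfolding ceq_def cequiv_def by blast
    have dis: "\<forall>i<r-1. \<forall>j<r-1. i \<noteq> j \<longrightarrow> P i \<inter> P j = {}" using cutP[OF P] unfolding is_cut_def by blast
    have "i = j" using dis i j by blast
    thus "\<exists>i<r-1. x \<in> P i \<and> z \<in> P i" using i j by blast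
  qed
  define K where "K x = {y\<in>V. ceq x y}" for x
  have finK: "finite (K x)" for x using finV by (simp add: K_def)
  have bal0: "balanced r \<delta> n P0" using bal P0C by auto
  have cut0: "is_cut r n P0" using bal0 by (simp add: balanced_def)
  have Kle: "real (card (K x)) \<le> M" if xV: "x \<in> V" for x
  proof -
    have "(\<Union>i<r-1. P0 i) = V" using cut0 unfolding is_cut_def V_def by blast
    then obtain i where i: "i < r-1" "x \<in> P0 i" using xV by auto
    have KP: "K x \<subseteq> P0 i"
    proof
      fix y assume "y \<in> K x"
      hence "ceq x y" by (simp add: K_def)
      then obtain j where j: "j < r-1" "x \<in> P0 j" "y \<in> P0 j" using P0max unfolding ceq_def cequiv_def by blast
      have dis: "\<forall>i<r-1. \<forall>j<r-1. i \<noteq> j \<longrightarrow> P0 i \<inter> P0 j = {}" using cut0 unfolding is_cut_def by blast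
      have "i = j" using dis i j by blast
      thus "y \<in> P0 i" using j by simp
    qed
    have "\<forall>i<r-1. P0 i \<subseteq> V" using cut0 unfolding is_cut_def V_def by blast
    hence "finite (P0 i)" using i finV by (meson finite_subset)
    hence "card (K x) \<le> card (P0 i)" using KP by (rule card_mono)
    moreover have "real (card (P0 i)) < M" using bal0 i by (simp add: balanced_def M_def q_def)
    ultimately show ?thesis by linarith
  qed
  have Mnn: "M \<ge> 0" using d0 q3 by (simp add: M_def)
  have comp_iff: "is_component r n C H S \<longleftrightarrow> (\<exists>x\<in>V. S = K x)" for S
    by (simp add: is_component_def K_def V_def ceq_def)
  define BC where "BC = {S. is_component r n C H S \<and> real (card S) > real n / real r}"
  have finBC: "finite BC"
    by (rule finite_subset[of _ "Pow V"]) (auto simp: BC_def comp_iff K_def finV)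
  show ?thesis
  proof (cases "card BC \<ge> r - 1")
    case True
    then obtain B where B: "B \<subseteq> BC" "card B = r - 1" by (meson obtain_subset_with_card_n)
    have "finite B" using B finBC finite_subset by blast
    then obtain h where h: "bij_betw h {0..<card B} B" using ex_bij_betw_nat_finite by blast
    show ?thesis
    proof (intro exI conjI allI impI)
      show "inj_on h {..<r-1}" using h B by (simp add: bij_betw_def atLeast0LessThan)
      fix i assume "i < r-1"
      hence "h i \<in> BC" using h B by (auto simp: bij_betw_def)
      thus "is_component r n C H (h i)" "real (card (h i)) > real n / real r" by (auto simp: BC_def)
    qed
  next
    case False
    hence cBC: "card BC \<le> r - 2" by simp
    define Bv where "Bv = {x\<in>V. real (card (K x)) > real n / real r}"
    have BvU: "Bv \<subseteq> \<Union>BC"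
    proof
      fix x assume x: "x \<in> Bv"
      hence "K x \<in> BC" using x by (auto simp: Bv_def BC_def comp_iff)
      moreover have "x \<in> K x" using x refl by (auto simp: Bv_def K_def)
      ultimately show "x \<in> \<Union>BC" by blast
    qed
    have "real (card Bv) \<le> real (card (\<Union>BC))"
      using BvU finBC by (auto intro!: card_mono simp: BC_def comp_iff finK)
    also have "\<dots> \<le> real (\<Sum>S\<in>BC. card S)" using card_Union_le_sum_card by (simp only: of_nat_le_iff)
    also have "\<dots> = (\<Sum>S\<in>BC. real (card S))" by simp
    also have "\<dots> \<le> (\<Sum>S\<in>BC. M)"
      by (intro sum_mono) (auto simp: BC_def comp_iff Kle)
    also have "\<dots> = real (card BC) * M" by simp
    also have "\<dots> \<le> real (r-2) * M" using cBC Mnn by (intro mult_right_mono) auto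
    also have "real (r-2) = q - 1" using r by (simp add: q_def of_nat_diff)
    finally have bBv: "real (card Bv) \<le> (q-1)*M" .
    have BvV: "Bv \<subseteq> V" by (auto simp: Bv_def)
    have cBv: "card Bv \<le> n" using card_mono[OF finV BvV] cardV by simp
    define s where "s = (\<Sum>x\<in>V. real (card (K x)))"
    have "s = (\<Sum>x\<in>Bv. real (card (K x))) + (\<Sum>x\<in>V-Bv. real (card (K x)))"
      unfolding s_def using finV BvV by (metis sum.subset_diff add.commute)
    also have "(\<Sum>x\<in>Bv. real (card (K x))) \<le> (\<Sum>x\<in>Bv. M)" using BvV by (intro sum_mono Kle) auto
    also have "(\<Sum>x\<in>V-Bv. real (card (K x))) \<le> (\<Sum>x\<in>V-Bv. real n / real r)"
      by (intro sum_mono) (auto simp: Bv_def)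
    finally have "s \<le> real (card Bv) * M + real (card (V - Bv)) * (real n / real r)" by simp
    moreover have "card (V - Bv) = n - card Bv" using finV BvV cardV by (simp add: card_Diff_subset finite_subset)
    ultimately have s1: "s \<le> M * real (card Bv) + real n/(q+1) * (real n - real (card Bv))"
      using cBv rq by (simp add: of_nat_diff algebra_simps)
    define U where "U = {{x, y} | x y. x \<noteq> y \<and> x \<in> vset n \<and> y \<in> vset n \<and> cequiv r n C H x y}"
    define E1 where "E1 = {p \<in> Sigma V K. fst p < snd p}"
    define E2 where "E2 = {p \<in> Sigma V K. snd p < fst p}"
    have finS: "finite (Sigma V K)" using finV finK by auto
    have "card E2 = card E1"
    proof -
      have "E2 = (\<lambda>(a,b). (b,a)) ` E1" 
        unfolding E1_def E2_def K_def by (auto intro: sym simp: image_iff)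
      moreover have "inj_on (\<lambda>(a,b). (b,a)) E1" by (auto simp: inj_on_def)
      ultimately show ?thesis by (simp add: card_image)
    qed
    moreover have "card E1 + card E2 \<le> card (Sigma V K)"
    proof -
      have "card E1 + card E2 = card (E1 \<union> E2)"
        using finS by (intro card_Un_disjoint[symmetric]) (auto simp: E1_def E2_def)
      also have "\<dots> \<le> card (Sigma V K)" using finS by (intro card_mono) (auto simp: E1_def E2_def)
      finally show ?thesis .
    qed
    moreover have "card U \<le> card E1"
    proof -
      have "U \<subseteq> (\<lambda>(a,b). {a,b}) ` E1"
      proof
        fix e assume "e \<in> U"
        then obtain x y where xy: "e = {x,y}" "x \<noteq> y" "x \<in> V" "y \<in> V" "ceq x y"
          by (auto simp: U_def V_def ceq_def)
        show "e \<in> (\<lambda>(a,b). {a,b}) ` E1"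
        proof (cases "x < y")
          case True
          hence "(x,y) \<in> E1" using xy by (auto simp: E1_def K_def)
          thus ?thesis using xy by force
        next
          case False
          hence "(y,x) \<in> E1" using xy sym by (auto simp: E1_def K_def)
          moreover have "e = {y,x}" using xy by auto
          ultimately show ?thesis by force
        qed
      qed
      moreover have "finite E1" using finS by (simp add: E1_def)
      ultimately show ?thesis by (meson card_image_le card_mono finite_imageI le_trans)
    qed
    moreover have "card (Sigma V K) = (\<Sum>x\<in>V. card (K x))" using finV finK by (simp add: card_SigmaI)
    ultimately have "2 * card U \<le> (\<Sum>x\<in>V. card (K x))" by linarith
    hence "2 * real (card U) \<le> s" unfolding s_def by (metis of_nat_le_iff of_nat_mult of_nat_sum of_nat_numeral)
    moreover have "real (card U) \<ge> (1 - \<alpha>) * real n ^ 2 / (2 * q)"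
      using rig by (simp add: rigid_def U_def q_def)
    ultimately have s2: "s \<ge> (1-\<alpha>)*real n^2/q" by (simp add: field_simps)
    have False
      by (rule arith_core[OF q3 _ a0 _ d0 _ M_def _ bBv s1 s2])
         (use npos a1 d1 in \<open>auto simp: q_def\<close>)
    thus ?thesis ..
  qed
qed

theorem mainTheorem15:
  fixes r :: nat
  assumes "r \<ge> 4"
  shows "\<exists>\<alpha>0>0. \<forall>\<alpha>. 0 < \<alpha> \<and> \<alpha> \<le> \<alpha>0 \<longrightarrow>
           (\<exists>\<delta>0>0. \<forall>\<delta>. 0 < \<delta> \<and> \<delta> \<le> \<delta>0 \<longrightarrow>
             (\<forall>n C H. C \<noteq> {} \<and> (\<forall>P\<in>C. balanced r \<delta> n P) \<and> is_graph n H \<and>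
                 rigid r \<alpha> n C H \<longrightarrow>
                 (\<exists>S :: nat \<Rightarrow> nat set. inj_on S {..<r-1} \<and>
                    (\<forall>i<r-1. is_component r n C H (S i) \<and> real (card (S i)) > real n / real r))))"
  proof -
  let ?q = "real (r-1)"
  show ?thesis
  proof (rule exI[of _ "1/(4*(?q+1)*?q)"], intro conjI allI impI)
    show "0 < 1/(4*(?q+1)*?q)" using assms by simp
    fix \<alpha> :: real assume a: "0 < \<alpha> \<and> \<alpha> \<le> 1/(4*(?q+1)*?q)"
    show "\<exists>\<delta>0>0. \<forall>\<delta>. 0 < \<delta> \<and> \<delta> \<le> \<delta>0 \<longrightarrow>
             (\<forall>n C H. C \<noteq> {} \<and> (\<forall>P\<in>C. balanced r \<delta> n P) \<and> is_graph n H \<and>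
                 rigid r \<alpha> n C H \<longrightarrow>
                 (\<exists>S :: nat \<Rightarrow> nat set. inj_on S {..<r-1} \<and>
                    (\<forall>i<r-1. is_component r n C H (S i) \<and> real (card (S i)) > real n / real r)))"
    proof (rule exI[of _ "1/(8*(?q+1)^2)"], intro conjI allI impI)
      show "0 < 1/(8*(?q+1)^2)" by (simp add: add_pos_nonneg)
      fix \<delta> :: real and n C H
      assume d: "0 < \<delta> \<and> \<delta> \<le> 1/(8*(?q+1)^2)"
        and h: "C \<noteq> {} \<and> (\<forall>P\<in>C. balanced r \<delta> n P) \<and> is_graph n H \<and> rigid r \<alpha> n C H"
      show "\<exists>S :: nat \<Rightarrow> nat set. inj_on S {..<r-1} \<and>
                    (\<forall>i<r-1. is_component r n C H (S i) \<and> real (card (S i)) > real n / real r)"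
        using main_aux[OF assms] a d h by blast
    qed
  qed
qed

end
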